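(* Let $V$ and $Z$ be $5$-dimensional even isotropic subspaces of $\mathbb{F}_2^{10}$. Then there exist $5$-dimensional even isotropic subspaces $V_0=V,V_1,\dots,V_n=Z$ of $\mathbb{F}_2^{10}$ and $3$-dimensional even isotropic subspaces $M_1,\dots,M_n$ of $\mathbb{F}_2^{10}$ such that $M_i\subset V_{i-1}\cap V_i$ for all $i=1,\dots,n$.
   Context: Elements of $\mathbb{F}_2^{10}$ are written $m=[\varepsilon,\delta]$ with $\varepsilon,\delta\in\mathbb{F}_2^5$; $m$ is even if $\varepsilon\cdot\delta=0\in\mathbb{F}_2$. For $m=[\varepsilon,\delta]$, $n=[\varepsilon_1,\delta_1]$ put $e(m,n)=(-1)^{\varepsilon\cdot\delta_1+\varepsilon_1\cdot\delta}$. A linear subspace $V$ is isotropic if $e(m,n)=1$ for all $m,n\in V$, and it is even isotropic if moreover all its elements are even. *)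

theory Defs
  imports "HOL-Analysis.Analysis" "HOL-Library.Z2"
begin

text \<open>F_2^10 is modelled as bit^(5+5); m = [eps, delta] with eps = Inl-part, delta = Inr-part.\<close>

type_synonym F2_10 = "bit ^ (5 + 5)"

definition eps :: "F2_10 \<Rightarrow> 5 \<Rightarrow> bit" where
  "eps m i = m $ Inl i"

definition dlt :: "F2_10 \<Rightarrow> 5 \<Rightarrow> bit" where
  "dlt m i = m $ Inr i"

definition dot5 :: "(5 \<Rightarrow> bit) \<Rightarrow> (5 \<Rightarrow> bit) \<Rightarrow> bit" where
  "dot5 a b = (\<Sum>i\<in>UNIV. a i * b i)"

definition even_char :: "F2_10 \<Rightarrow> bool" where
  "even_char m \<longleftrightarrow> dot5 (eps m) (dlt m) = 0"

definition e_pair :: "F2_10 \<Rightarrow> F2_10 \<Rightarrow> int" where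
  "e_pair m n = (if dot5 (eps m) (dlt n) + dot5 (eps n) (dlt m) = 0 then 1 else -1)"

definition isotropic :: "F2_10 set \<Rightarrow> bool" where
  "isotropic V \<longleftrightarrow> vec.subspace V \<and> (\<forall>m\<in>V. \<forall>n\<in>V. e_pair m n = 1)"

definition even_isotropic :: "F2_10 set \<Rightarrow> bool" where
  "even_isotropic V \<longleftrightarrow> isotropic V \<and> (\<forall>m\<in>V. even_char m)"

end

theory Submission imports Defs begin

definition dotv :: "'a::field^'n \<Rightarrow> 'a^'n \<Rightarrow> 'a" where
  "dotv x y = (\<Sum>i\<in>UNIV. x$i * y$i)"

lemma dotv_add1: "dotv (x + y) z = dotv x z + dotv y z"
  by (simp add: dotv_def distrib_right sum.distrib)
lemma dotv_scale1: "dotv (c *s x) z = c * dotv x z"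
  by (simp add: dotv_def sum_distrib_left mult.assoc)
lemma dotv_add2: "dotv z (x + y) = dotv z x + dotv z y"
  by (simp add: dotv_def distrib_left sum.distrib)
lemma dotv_scale2: "dotv z (c *s x) = c * dotv z x"
  by (simp add: dotv_def sum_distrib_left mult.assoc mult.left_commute)
lemma dotv_axis: "dotv (axis k 1) y = y $ k"
proof -
  have "dotv (axis k 1) y = (\<Sum>i\<in>UNIV. if i = k then y$i else 0)"
    unfolding dotv_def by (intro sum.cong) (auto simp: axis_def)
  also have "\<dots> = y $ k" by simp
  finally show ?thesis .
qed

lemma subspace_dot1: "vec.subspace {x. dotv x u = 0}"
  by (auto simp: vec.subspace_def dotv_add1 dotv_scale1) (simp add: dotv_def)

lemma subspace_dot1': "vec.subspace {x. dotv x u = dotv x u'}"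
  by (auto simp: vec.subspace_def dotv_add1 dotv_scale1) (simp add: dotv_def)

lemma subspace_perp: "vec.subspace {y. \<forall>w\<in>W. dotv w y = 0}"
  by (auto simp: vec.subspace_def dotv_add2 dotv_scale2) (simp add: dotv_def)

lemma perp_bound:
  fixes W :: "('a::field^'n) set"
  shows "vec.dim W + vec.dim {y. \<forall>w\<in>W. dotv w y = 0} \<le> CARD('n)"
proof -
  obtain B where B: "B \<subseteq> W" "vec.independent B" "W \<subseteq> vec.span B" "card B = vec.dim W"
    using vec.basis_exists by blast
  define B' where "B' = vec.extend_basis B"
  have BB': "B \<subseteq> B'" and iB': "vec.independent B'" and sB': "vec.span B' = UNIV"
    using B(2) unfolding B'_def
    by (auto simp: vec.extend_basis_superset vec.independent_extend_basis)
  have fB': "finite B'" using iB' vec.finiteI_independent by blast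
  have fB: "finite B" using B(2) vec.finiteI_independent by blast
  have "card B' = vec.dim B'" using vec.dim_eq_card_independent[OF iB'] by simp
  also have "\<dots> = vec.dim (UNIV :: ('a^'n) set)" by (metis sB' vec.dim_span)
  also have "\<dots> = CARD('n)" by (rule vec_dim_card)
  finally have cB': "card B' = card (UNIV :: 'n set)" .
  obtain g where g: "bij_betw g (UNIV::'n set) B'"
    using finite_same_card_bij[OF finite_class.finite_UNIV fB'] cB' by metis
  define T where "T u = (\<chi> i. dotv (g i) u)" for u :: "'a^'n"
  have linT: "Vector_Spaces.linear (*s) (*s) T"
    unfolding Vector_Spaces.linear_iff
    by (auto simp: T_def vec_eq_iff dotv_add2 dotv_scale2 vec.vector_space_axioms)
  have injT: "inj T"
  proof
    fix u u' assume "T u = T u'"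
    then have "\<forall>i. dotv (g i) u = dotv (g i) u'" by (simp add: T_def vec_eq_iff)
    then have "B' \<subseteq> {x. dotv x u = dotv x u'}"
      using g by (auto simp: bij_betw_def)
    then have "vec.span B' \<subseteq> {x. dotv x u = dotv x u'}"
      using subspace_dot1' vec.span_minimal by blast
    then have "\<forall>k. dotv (axis k 1) u = dotv (axis k 1) u'" using sB' by auto
    then show "u = u'" by (simp add: dotv_axis vec_eq_iff)
  qed
  have surjT: "surj T" using vec.linear_inj_imp_surj[OF linT injT] .
  have "\<forall>b\<in>B. \<exists>v. T v = axis (inv_into UNIV g b) 1"
    using surjT by (metis surj_def)
  then obtain u where u: "\<And>b. b \<in> B \<Longrightarrow> T (u b) = axis (inv_into UNIV g b) 1"
    by metis
  have u_prop: "dotv b' (u b) = (if b' = b then 1 else 0)" if bB: "b \<in> B" and bB': "b' \<in> B'" for b b'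
  proof -
    obtain i where i: "b' = g i"
      using bB' g unfolding bij_betw_def by blast
    have bi: "b = g (inv_into UNIV g b)"
      using bB BB' g by (metis bij_betw_inv_into_right subsetD)
    have "dotv b' (u b) = T (u b) $ i" by (simp add: T_def i)
    also have "\<dots> = (if i = inv_into UNIV g b then 1 else 0)"
      using u[OF bB] by (simp add: axis_def)
    also have "\<dots> = (if b' = b then 1 else 0)"
      using g bi i by (metis bij_betw_imp_inj_on inj_onD iso_tuple_UNIV_I)
    finally show ?thesis .
  qed
  define P where "P = {y. \<forall>w\<in>W. dotv w y = 0}"
  have key: "finite A \<Longrightarrow> A \<subseteq> B \<Longrightarrow> vec.dim (P \<union> u ` A) = vec.dim P + card A" for A
  proof (induction A rule: finite_induct)
    case empty then show ?case by simp
  next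
    case (insert b A)
    note 2 = insert
    have sub: "vec.span (P \<union> u ` A) \<subseteq> {y. dotv b y = 0}"
    proof (rule vec.span_minimal)
      show "P \<union> u ` A \<subseteq> {y. dotv b y = 0}"
      proof
        fix y assume "y \<in> P \<union> u ` A"
        then show "y \<in> {y. dotv b y = 0}"
        proof
          assume "y \<in> P" then show ?thesis using 2 B(1) by (auto simp: P_def)
        next
          assume "y \<in> u ` A"
          then obtain a where a: "a \<in> A" "y = u a" by auto
          have "a \<noteq> b" using a 2 by auto
          then show ?thesis using u_prop[of a b] a 2 BB' by auto
        qed
      qed
      show "vec.subspace {y. dotv b y = 0}"
        using subspace_perp[of "{b}"] by simp
    qed
    have "dotv b (u b) = 1" using u_prop[of b b] 2 BB' by auto
    then have "u b \<notin> vec.span (P \<union> u ` A)" using sub by auto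
    moreover have "P \<union> u ` insert b A = insert (u b) (P \<union> u ` A)" by auto
    ultimately show ?case using 2 by (simp add: vec.dim_insert)
  qed
  have "vec.dim (P \<union> u ` B) \<le> CARD('n)"
    by (metis vec_dim_card vec.dim_subset subset_UNIV)
  then show ?thesis using key[OF fB] B(4) P_def by simp
qed

declare add_bit_eq_xor[simp del] mult_bit_eq_and[simp del]

definition Bf :: "F2_10 \<Rightarrow> F2_10 \<Rightarrow> bit" where
  "Bf m n = dot5 (eps m) (dlt n) + dot5 (eps n) (dlt m)"
definition qf :: "F2_10 \<Rightarrow> bit" where
  "qf m = dot5 (eps m) (dlt m)"

lemma Bf_sym: "Bf x y = Bf y x"
  by (simp add: Bf_def add.commute)
lemma Bf_add1: "Bf (x + y) z = Bf x z + Bf y z"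
  by (simp add: Bf_def dot5_def eps_def dlt_def distrib_right distrib_left sum.distrib; simp add: ac_simps)
lemma Bf_scale1: "Bf (c *s x) z = c * Bf x z"
  by (simp add: Bf_def dot5_def eps_def dlt_def sum_distrib_left algebra_simps)
lemma Bf_zero1: "Bf 0 z = 0"
  by (simp add: Bf_def dot5_def eps_def dlt_def)
lemma Bf_diff2: "Bf z (x - y) = Bf z x - Bf z y"
  by (simp add: Bf_def dot5_def eps_def dlt_def sum_subtractf algebra_simps sum.distrib; simp add: ac_simps)
lemma qf_add: "qf (x + y) = qf x + qf y + Bf x y"
  by (simp add: qf_def Bf_def dot5_def eps_def dlt_def distrib_right distrib_left sum.distrib; simp add: ac_simps)
lemma qf_scale: "qf (c *s x) = c * c * qf x"
  by (simp add: qf_def dot5_def eps_def dlt_def sum_distrib_left algebra_simps)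
lemma qf_zero: "qf 0 = 0"
  by (simp add: qf_def dot5_def eps_def dlt_def)

lemma e_pair_iff: "e_pair m n = 1 \<longleftrightarrow> Bf m n = 0"
  by (simp add: e_pair_def Bf_def)
lemma even_iff: "even_char m \<longleftrightarrow> qf m = 0"
  by (simp add: even_char_def qf_def)

lemma even_isotropic_iff: "even_isotropic V \<longleftrightarrow>
   vec.subspace V \<and> (\<forall>m\<in>V. \<forall>n\<in>V. Bf m n = 0) \<and> (\<forall>m\<in>V. qf m = 0)"
  by (simp add: even_isotropic_def isotropic_def e_pair_iff even_iff)

definition sw :: "F2_10 \<Rightarrow> F2_10" where
  "sw x = (\<chi> k. case k of Inl i \<Rightarrow> x $ Inr i | Inr i \<Rightarrow> x $ Inl i)"

lemma sw_sw: "sw (sw x) = x"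
  by (simp add: sw_def vec_eq_iff split: sum.split)

lemma dotv_sw: "dotv (sw x) y = Bf x y"
proof -
  have "dotv (sw x) y = (\<Sum>k\<in>(UNIV::5 set) <+> (UNIV::5 set). sw x $ k * y $ k)"
    by (simp add: dotv_def UNIV_Plus_UNIV)
  also have "\<dots> = (\<Sum>i\<in>UNIV. x $ Inr i * y $ Inl i) + (\<Sum>i\<in>UNIV. x $ Inl i * y $ Inr i)"
    by (subst sum.Plus) (auto simp: sw_def)
  also have "\<dots> = Bf x y"
    by (simp add: Bf_def dot5_def eps_def dlt_def mult.commute add.commute)
  finally show ?thesis .
qed

lemma linear_sw: "Vector_Spaces.linear (*s) (*s) sw"
  unfolding Vector_Spaces.linear_iff
  by (auto simp: sw_def vec_eq_iff vec.vector_space_axioms split: sum.split)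

lemma iso_dim_le:
  assumes "\<forall>m\<in>V. \<forall>n\<in>V. Bf m n = 0"
  shows "vec.dim V \<le> 5"
proof -
  have "V \<subseteq> {y. \<forall>w\<in>sw ` V. dotv w y = 0}"
    using assms by (auto simp: dotv_sw)
  then have "vec.dim V \<le> vec.dim {y. \<forall>w\<in>sw ` V. dotv w y = 0}"
    by (rule vec.dim_subset)
  moreover have "vec.dim (sw ` V) = vec.dim V"
    by (rule vec.dim_image_eq[OF linear_sw]) (metis inj_onI sw_sw)
  moreover have "vec.dim (sw ` V) + vec.dim {y. \<forall>w\<in>sw ` V. dotv w y = 0} \<le> CARD(5+5)"
    by (rule perp_bound)
  ultimately show ?thesis by simp
qed

lemma span_ti:
  assumes S: "\<forall>m\<in>S. \<forall>n\<in>S. Bf m n = 0" "\<forall>m\<in>S. qf m = 0"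
  shows "even_isotropic (vec.span S)"
proof -
  have sub1: "vec.subspace {x. \<forall>y\<in>T. Bf x y = 0}" for T
    by (auto simp: vec.subspace_def Bf_add1 Bf_scale1 Bf_zero1)
  have "vec.span S \<subseteq> {x. \<forall>y\<in>S. Bf x y = 0}"
    by (rule vec.span_minimal[OF _ sub1]) (use S in auto)
  then have "S \<subseteq> {x. \<forall>y\<in>vec.span S. Bf x y = 0}"
    by (auto simp: subset_iff) (metis Bf_sym)
  then have B2: "vec.span S \<subseteq> {x. \<forall>y\<in>vec.span S. Bf x y = 0}"
    by (rule vec.span_minimal[OF _ sub1])
  have sub3: "vec.subspace {x \<in> vec.span S. qf x = 0}"
    unfolding vec.subspace_def
  proof (intro conjI ballI allI)
    show "0 \<in> {x \<in> vec.span S. qf x = 0}" by (simp add: qf_zero vec.span_zero)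
  next
    fix x y assume x: "x \<in> {x \<in> vec.span S. qf x = 0}" and y: "y \<in> {x \<in> vec.span S. qf x = 0}"
    then show "x + y \<in> {x \<in> vec.span S. qf x = 0}"
      using B2 by (auto simp: qf_add vec.span_add)
  next
    fix c x assume x: "x \<in> {x \<in> vec.span S. qf x = 0}"
    then show "c *s x \<in> {x \<in> vec.span S. qf x = 0}"
      by (auto simp: qf_scale vec.span_scale)
  qed
  have "vec.span S \<subseteq> {x \<in> vec.span S. qf x = 0}"
    by (rule vec.span_minimal[OF _ sub3]) (use S in \<open>auto simp: vec.span_base\<close>)
  then show ?thesis using B2
    by (auto simp: even_isotropic_iff vec.subspace_span)
qed

lemma even_iso_sub:
  assumes "even_isotropic V" "vec.subspace T" "T \<subseteq> V"
  shows "even_isotropic T"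
  using assms by (auto simp: even_isotropic_iff)



lemma step:
  assumes V: "even_isotropic V" "vec.dim V = 5"
    and Z: "even_isotropic Z" "vec.dim Z = 5"
    and z: "z \<in> Z" "z \<notin> V"
  shows "\<exists>V' M. even_isotropic V' \<and> vec.dim V' = 5 \<and> even_isotropic M \<and> vec.dim M = 3
           \<and> M \<subseteq> V \<inter> V' \<and> vec.dim (V \<inter> Z) < vec.dim (V' \<inter> Z)"
proof -
  have sV: "vec.subspace V" and BV: "\<forall>m\<in>V. \<forall>n\<in>V. Bf m n = 0" and qV: "\<forall>m\<in>V. qf m = 0"
    using V by (auto simp: even_isotropic_iff)
  have sZ: "vec.subspace Z" and BZ: "\<forall>m\<in>Z. \<forall>n\<in>Z. Bf m n = 0" and qZ: "\<forall>m\<in>Z. qf m = 0"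
    using Z by (auto simp: even_isotropic_iff)
  have spV: "vec.span V = V" using sV by simp
  obtain v0 where v0: "v0 \<in> V" "Bf z v0 = 1"
  proof -
    have ex: "\<exists>v0\<in>V. Bf z v0 = 1"
    proof (rule ccontr)
    assume "\<not> (\<exists>v0\<in>V. Bf z v0 = 1)"
    then have all0: "\<forall>v\<in>V. Bf z v = 0" using bit_not_zero_iff by blast
    have "\<forall>m\<in>insert z V. \<forall>n\<in>insert z V. Bf m n = 0"
    proof -
      have "\<forall>v\<in>V. Bf v z = 0"
      proof
        fix v assume "v \<in> V" then show "Bf v z = 0" using all0 Bf_sym[of v z] by simp
      qed
      then show ?thesis using all0 BV BZ z(1) by auto
    qed
    moreover have "\<forall>m\<in>insert z V. qf m = 0" using qV qZ z(1) by auto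
    ultimately have "even_isotropic (vec.span (insert z V))" by (rule span_ti)
    then have "vec.dim (vec.span (insert z V)) \<le> 5"
      by (intro iso_dim_le) (auto simp: even_isotropic_iff)
    moreover have "vec.dim (vec.span (insert z V)) = 6"
      using z(2) V(2) by (simp add: vec.dim_span vec.dim_insert spV)
    ultimately show False by simp
  qed
  then show ?thesis using that by blast
  qed
  define H where "H = {v \<in> V. Bf z v = 0}"
  have HV: "H \<subseteq> V" by (auto simp: H_def)
  have "V \<subseteq> vec.span (insert v0 H)"
  proof
    fix v assume v: "v \<in> V"
    show "v \<in> vec.span (insert v0 H)"
    proof (cases "Bf z v = 0")
      case True
      then show ?thesis using v by (auto simp: H_def intro: vec.span_base)
    next
      case False
      then have "Bf z v = 1" by simp
      then have "v - v0 \<in> H"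
      proof -
        have "v - v0 \<in> V" by (rule vec.subspace_diff[OF sV v v0(1)])
        moreover have "Bf z (v - v0) = 0" using \<open>Bf z v = 1\<close> v0(2) by (simp add: Bf_diff2)
        ultimately show ?thesis by (simp add: H_def)
      qed
      then have "(v - v0) + v0 \<in> vec.span (insert v0 H)"
        by (intro vec.span_add) (auto intro: vec.span_base)
      then show ?thesis by simp
    qed
  qed
  then have "vec.dim V \<le> vec.dim (insert v0 H)" by (rule vec.dim_mono)
  also have "\<dots> \<le> vec.dim H + 1" by (simp add: vec.dim_insert)
  finally have dH: "4 \<le> vec.dim H" using V(2) by simp
  have spH: "vec.span H \<subseteq> V" using HV sV by (rule vec.span_minimal)
  define V' where "V' = vec.span (insert z H)"
  have "\<forall>m\<in>insert z H. \<forall>n\<in>insert z H. Bf m n = 0"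
  proof -
    have "\<forall>v\<in>H. Bf v z = 0"
    proof
      fix v assume "v \<in> H" then show "Bf v z = 0" using Bf_sym[of v z] by (simp add: H_def)
    qed
    moreover have "\<forall>v\<in>H. Bf z v = 0" by (simp add: H_def)
    moreover have "\<forall>m\<in>H. \<forall>n\<in>H. Bf m n = 0" using BV HV by blast
    moreover have "Bf z z = 0" using BZ z(1) by blast
    ultimately show ?thesis by auto
  qed
  moreover have "\<forall>m\<in>insert z H. qf m = 0" using qV qZ z(1) HV by auto
  ultimately have eV': "even_isotropic V'" unfolding V'_def by (rule span_ti)
  have "vec.dim V' = vec.dim H + 1"
    using spH z(2) by (auto simp: V'_def vec.dim_span vec.dim_insert)
  moreover have "vec.dim V' \<le> 5"
    using eV' by (intro iso_dim_le) (auto simp: even_isotropic_iff)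
  ultimately have dV': "vec.dim V' = 5" and dH': "vec.dim H = 4" using dH by auto
  obtain M where M: "vec.subspace M" "M \<subseteq> vec.span H" "vec.dim M = 3"
    using vec.choose_subspace_of_subspace[of 3 H] dH' by auto
  have MV': "M \<subseteq> V'" using M(2) unfolding V'_def by (meson order_trans subset_insertI vec.span_mono)
  have MV: "M \<subseteq> V" using M(2) spH by auto
  have eM: "even_isotropic M" using even_iso_sub[OF eV' M(1) MV'] .
  define W where "W = V \<inter> Z"
  have sW: "vec.subspace W" unfolding W_def using sV sZ by (rule vec.subspace_inter)
  have WH: "W \<subseteq> H" using BZ z(1) by (auto simp: W_def H_def)
  have "vec.dim (insert z W) = vec.dim W + 1"
  proof -
    have "z \<notin> W" using z(2) by (simp add: W_def)
    then have "z \<notin> vec.span W" using sW by (metis vec.span_eq_iff)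
    then show ?thesis by (simp add: vec.dim_insert)
  qed
  moreover have "vec.span (insert z W) \<subseteq> V' \<inter> Z"
  proof (rule Int_greatest)
    show "vec.span (insert z W) \<subseteq> V'" unfolding V'_def using WH by (intro vec.span_mono) auto
    show "vec.span (insert z W) \<subseteq> Z" using z(1) sZ by (intro vec.span_minimal) (auto simp: W_def)
  qed
  then have "vec.dim (insert z W) \<le> vec.dim (V' \<inter> Z)"
    by (metis vec.dim_span vec.dim_subset)
  ultimately have "vec.dim (V \<inter> Z) < vec.dim (V' \<inter> Z)" by (simp add: W_def)
  then show ?thesis using eV' dV' eM M(3) MV MV' by blast
qed


definition chain :: "F2_10 set \<Rightarrow> F2_10 set \<Rightarrow> bool" where
  "chain V Z \<longleftrightarrow> (\<exists>(n::nat) (Vs :: nat \<Rightarrow> F2_10 set) (Ms :: nat \<Rightarrow> F2_10 set).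
           Vs 0 = V \<and> Vs n = Z \<and>
           (\<forall>i\<le>n. even_isotropic (Vs i) \<and> vec.dim (Vs i) = 5) \<and>
           (\<forall>i\<in>{1..n}. even_isotropic (Ms i) \<and> vec.dim (Ms i) = 3 \<and>
                        Ms i \<subseteq> Vs (i - 1) \<inter> Vs i))"

lemma chain_refl: "even_isotropic Z \<Longrightarrow> vec.dim Z = 5 \<Longrightarrow> chain Z Z"
  unfolding chain_def by (intro exI[of _ 0] exI[of _ "\<lambda>_. Z"] exI[of _ "\<lambda>_. Z"]) auto

lemma chain_cons:
  assumes "chain V' Z" "even_isotropic V" "vec.dim V = 5"
    "even_isotropic M" "vec.dim M = 3" "M \<subseteq> V \<inter> V'"
  shows "chain V Z"
proof -
  obtain n :: nat and Vs Ms :: "nat \<Rightarrow> F2_10 set" where c: "Vs 0 = V'" "Vs n = Z"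
    "\<forall>i\<le>n. even_isotropic (Vs i) \<and> vec.dim (Vs i) = 5"
    "\<forall>i\<in>{1..n}. even_isotropic (Ms i) \<and> vec.dim (Ms i) = 3 \<and> Ms i \<subseteq> Vs (i - 1) \<inter> Vs i"
    using assms(1) unfolding chain_def by (elim exE conjE) blast
  define Vs2 where "Vs2 i = (if i = 0 then V else Vs (i - 1))" for i
  define Ms2 where "Ms2 i = (if i = 1 then M else Ms (i - 1))" for i
  have a1: "Vs2 0 = V" by (simp add: Vs2_def)
  have a2: "Vs2 (Suc n) = Z" using c(2) by (simp add: Vs2_def)
  have a3: "\<forall>i\<le>Suc n. even_isotropic (Vs2 i) \<and> vec.dim (Vs2 i) = 5"
  proof (intro allI impI)
    fix i assume i: "i \<le> Suc n"
    show "even_isotropic (Vs2 i) \<and> vec.dim (Vs2 i) = 5"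
    proof (cases "i = 0")
      case True then show ?thesis using assms(2,3) by (simp add: Vs2_def)
    next
      case False
      then have "i - 1 \<le> n" using i by simp
      then have "even_isotropic (Vs (i - 1)) \<and> vec.dim (Vs (i - 1)) = 5" using c(3) by blast
      then show ?thesis using False by (simp add: Vs2_def)
    qed
  qed
  have a4: "\<forall>i\<in>{1..Suc n}. even_isotropic (Ms2 i) \<and> vec.dim (Ms2 i) = 3 \<and> Ms2 i \<subseteq> Vs2 (i - 1) \<inter> Vs2 i"
  proof
    fix i assume i: "i \<in> {1..Suc n}"
    show "even_isotropic (Ms2 i) \<and> vec.dim (Ms2 i) = 3 \<and> Ms2 i \<subseteq> Vs2 (i - 1) \<inter> Vs2 i"
    proof (cases "i = 1")
      case True then show ?thesis using assms(4,5,6) c(1) by (simp add: Ms2_def Vs2_def)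
    next
      case False
      define j where "j = i - 2"
      have j: "i = Suc (Suc j)" using i False by (auto simp: j_def)
      then have "Suc j \<in> {1..n}" using i by simp
      from bspec[OF c(4) this]
      have "even_isotropic (Ms (Suc j)) \<and> vec.dim (Ms (Suc j)) = 3 \<and> Ms (Suc j) \<subseteq> Vs j \<inter> Vs (Suc j)"
        by simp
      then show ?thesis using j by (simp add: Ms2_def Vs2_def)
    qed
  qed
  note a = a1 a2 a3 a4
  show ?thesis unfolding chain_def
    using a1 a2 a3 a4 by (intro exI[of _ "Suc n"] exI[of _ Vs2] exI[of _ Ms2] conjI)
qed

lemma conn_aux:
  assumes Z: "even_isotropic Z" "vec.dim Z = 5"
  shows "\<forall>V. even_isotropic V \<and> vec.dim V = 5 \<and> 5 - vec.dim (V \<inter> Z) = d \<longrightarrow> chain V Z"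
proof (induction d rule: less_induct)
  case (less d)
  show ?case
  proof (intro allI impI)
    fix V assume V: "even_isotropic V \<and> vec.dim V = 5 \<and> 5 - vec.dim (V \<inter> Z) = d"
    show "chain V Z"
    proof (cases "Z \<subseteq> V")
      case True
      have "Z = V"
        using vec.subspace_dim_equal[of Z V] True V Z by (auto simp: even_isotropic_iff)
      then show ?thesis using chain_refl Z by simp
    next
      case False
      then obtain z where z: "z \<in> Z" "z \<notin> V" by auto
      obtain V' M where VM: "even_isotropic V'" "vec.dim V' = 5" "even_isotropic M" "vec.dim M = 3"
        "M \<subseteq> V \<inter> V'" "vec.dim (V \<inter> Z) < vec.dim (V' \<inter> Z)"
        using step[of V Z z] V Z z by blast
      have "vec.dim (V' \<inter> Z) \<le> 5" using vec.dim_subset[of "V' \<inter> Z" Z] Z by auto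
      then have "5 - vec.dim (V' \<inter> Z) < d" using VM(6) V by auto
      then have "chain V' Z" using less.IH[rule_format, of "5 - vec.dim (V' \<inter> Z)" V'] VM(1,2) by blast
      then show ?thesis using chain_cons[OF _ _ _ VM(3,4,5)] V by blast
    qed
  qed
qed

theorem mainTheorem5:
  fixes V Z :: "F2_10 set"
  assumes "even_isotropic V" "vec.dim V = 5"
      and "even_isotropic Z" "vec.dim Z = 5"
  shows "\<exists>(n::nat) (Vs :: nat \<Rightarrow> F2_10 set) (Ms :: nat \<Rightarrow> F2_10 set).
           Vs 0 = V \<and> Vs n = Z \<and>
           (\<forall>i\<le>n. even_isotropic (Vs i) \<and> vec.dim (Vs i) = 5) \<and>
           (\<forall>i\<in>{1..n}. even_isotropic (Ms i) \<and> vec.dim (Ms i) = 3 \<and>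
                        Ms i \<subseteq> Vs (i - 1) \<inter> Vs i)"
proof -
  have "chain V Z" using conn_aux[OF assms(3,4), rule_format, of V "5 - vec.dim (V \<inter> Z)"] assms(1,2) by blast
  then show ?thesis unfolding chain_def .
qed

end
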